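(* Assume the total harvested energy is finite. The optimal value of problem (P) equals the optimal value of problem (Q): $$\max_{\{\bar p_{k,i}\}}\ \sum_{i=1}^N R(\bar p_{1,i},\bar p_{2,i})$$ subject to $\sum_{n=1}^{i}(E_{k,n}-\bar p_{k,n})\ge 0$ and $\bar p_{k,i}\ge0$ for $k=1,2$, $i=1,\dots,N$. Moreover, suppose $\{\bar p_{k,i}\}$ is optimal for (Q), and for each $i$ the pair $(\delta_{1,i},\delta_{2,i})$ attains the maximum defining $R(\bar p_{1,i},\bar p_{2,i})$. Set $p_{k,i}=\bar p_{k,i}-\delta_{k,i}+\alpha_j\delta_{j,i}$ ($j\ne k$). Then $\{p_{k,i},\delta_{k,i}\}$ is an optimal solution of (P).
   Context: Two-way channel setting. There are two nodes, $N$ unit-length slots, channel gains $h_1,h_2>0$, noise powers $\sigma_1^2,\sigma_2^2>0$, efficiencies $\alpha_1,\alpha_2\in[0,1]$, and harvested energies $E_{k,i}\ge0$. A power policy is $\{p_{k,i},\delta_{k,i}\}$. Here $p_{k,i}$ is the transmit power of $T_k$ in slot $i$, and $\delta_{k,i}$ is the energy $T_k$ sends to $T_j$ ($j\ne k$), of which $\alpha_k\delta_{k,i}$ is received. The battery state is $$S_{k,i}=\sum_{n=1}^{i}(E_{k,n}-p_{k,n}+\alpha_j\delta_{j,n}-\delta_{k,n}).$$ Let $$C(p_1,p_2)=\tfrac12\log(1+h_1p_1/\sigma_2^2)+\tfrac12\log(1+h_2p_2/\sigma_1^2).$$ Problem (P) is to maximize $\sum_i C(p_{1,i},p_{2,i})$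 subject to $S_{k,i}\ge0$, $p_{k,i}\ge0$ and $\delta_{k,i}\ge0$ for all $k,i$. For $\pi_1,\pi_2\ge0$, define $$R(\pi_1,\pi_2)=\max\{C(\pi_1-\delta_1+\alpha_2\delta_2,\ \pi_2-\delta_2+\alpha_1\delta_1):\ 0\le\delta_k\le\pi_k,\ k=1,2\}.$$ *)

theory Defs
  imports Complex_Main
begin

text \<open>Channel parameters of the two-way system: gains h1 h2, noise powers
  s1 = sigma_1^2, s2 = sigma_2^2, efficiencies a1 a2, harvested energies E1 E2
  (slot-indexed, slots 1..N).\<close>

record chan =
  h1 :: real
  h2 :: real
  s1 :: real
  s2 :: real
  a1 :: real
  a2 :: real
  E1 :: "nat \<Rightarrow> real"
  E2 :: "nat \<Rightarrow> real"

definition valid_chan :: "chan \<Rightarrow> nat \<Rightarrow> bool" where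
  "valid_chan c N \<longleftrightarrow> h1 c > 0 \<and> h2 c > 0 \<and> s1 c > 0 \<and> s2 c > 0 \<and>
     0 \<le> a1 c \<and> a1 c \<le> 1 \<and> 0 \<le> a2 c \<and> a2 c \<le> 1 \<and>
     (\<forall>i\<in>{1..N}. E1 c i \<ge> 0 \<and> E2 c i \<ge> 0)"

definition Crate :: "chan \<Rightarrow> real \<Rightarrow> real \<Rightarrow> real" where
  "Crate c p1 p2 = ln (1 + h1 c * p1 / s2 c) / 2 + ln (1 + h2 c * p2 / s1 c) / 2"

definition Rfun :: "chan \<Rightarrow> real \<Rightarrow> real \<Rightarrow> real" where
  "Rfun c \<pi>1 \<pi>2 = Sup {Crate c (\<pi>1 - d1 + a2 c * d2) (\<pi>2 - d2 + a1 c * d1) | d1 d2.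
      0 \<le> d1 \<and> d1 \<le> \<pi>1 \<and> 0 \<le> d2 \<and> d2 \<le> \<pi>2}"

definition S1 :: "chan \<Rightarrow> (nat \<Rightarrow> real) \<Rightarrow> (nat \<Rightarrow> real) \<Rightarrow> (nat \<Rightarrow> real) \<Rightarrow> nat \<Rightarrow> real" where
  "S1 c p1 d1 d2 i = (\<Sum>n=1..i. E1 c n - p1 n + a2 c * d2 n - d1 n)"

definition S2 :: "chan \<Rightarrow> (nat \<Rightarrow> real) \<Rightarrow> (nat \<Rightarrow> real) \<Rightarrow> (nat \<Rightarrow> real) \<Rightarrow> nat \<Rightarrow> real" where
  "S2 c p2 d1 d2 i = (\<Sum>n=1..i. E2 c n - p2 n + a1 c * d1 n - d2 n)"

definition feasP :: "chan \<Rightarrow> nat \<Rightarrow> (nat \<Rightarrow> real) \<Rightarrow> (nat \<Rightarrow> real) \<Rightarrow> (nat \<Rightarrow> real) \<Rightarrow> (nat \<Rightarrow> real) \<Rightarrow> bool" where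
  "feasP c N p1 p2 d1 d2 \<longleftrightarrow> (\<forall>i\<in>{1..N}.
      S1 c p1 d1 d2 i \<ge> 0 \<and> S2 c p2 d1 d2 i \<ge> 0 \<and>
      p1 i \<ge> 0 \<and> p2 i \<ge> 0 \<and> d1 i \<ge> 0 \<and> d2 i \<ge> 0)"

definition objP :: "chan \<Rightarrow> nat \<Rightarrow> (nat \<Rightarrow> real) \<Rightarrow> (nat \<Rightarrow> real) \<Rightarrow> real" where
  "objP c N p1 p2 = (\<Sum>i=1..N. Crate c (p1 i) (p2 i))"

definition optP :: "chan \<Rightarrow> nat \<Rightarrow> real" where
  "optP c N = Sup {objP c N p1 p2 | p1 p2 d1 d2. feasP c N p1 p2 d1 d2}"

definition optimalP :: "chan \<Rightarrow> nat \<Rightarrow> (nat \<Rightarrow> real) \<Rightarrow> (nat \<Rightarrow> real) \<Rightarrow> (nat \<Rightarrow> real) \<Rightarrow> (nat \<Rightarrow> real) \<Rightarrow> bool" where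
  "optimalP c N p1 p2 d1 d2 \<longleftrightarrow> feasP c N p1 p2 d1 d2 \<and>
     (\<forall>q1 q2 e1 e2. feasP c N q1 q2 e1 e2 \<longrightarrow> objP c N q1 q2 \<le> objP c N p1 p2)"

definition feasQ :: "chan \<Rightarrow> nat \<Rightarrow> (nat \<Rightarrow> real) \<Rightarrow> (nat \<Rightarrow> real) \<Rightarrow> bool" where
  "feasQ c N q1 q2 \<longleftrightarrow> (\<forall>i\<in>{1..N}.
      (\<Sum>n=1..i. E1 c n - q1 n) \<ge> 0 \<and> (\<Sum>n=1..i. E2 c n - q2 n) \<ge> 0 \<and>
      q1 i \<ge> 0 \<and> q2 i \<ge> 0)"

definition objQ :: "chan \<Rightarrow> nat \<Rightarrow> (nat \<Rightarrow> real) \<Rightarrow> (nat \<Rightarrow> real) \<Rightarrow> real" where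
  "objQ c N q1 q2 = (\<Sum>i=1..N. Rfun c (q1 i) (q2 i))"

definition optQ :: "chan \<Rightarrow> nat \<Rightarrow> real" where
  "optQ c N = Sup {objQ c N q1 q2 | q1 q2. feasQ c N q1 q2}"

definition optimalQ :: "chan \<Rightarrow> nat \<Rightarrow> (nat \<Rightarrow> real) \<Rightarrow> (nat \<Rightarrow> real) \<Rightarrow> bool" where
  "optimalQ c N q1 q2 \<longleftrightarrow> feasQ c N q1 q2 \<and>
     (\<forall>r1 r2. feasQ c N r1 r2 \<longrightarrow> objQ c N r1 r2 \<le> objQ c N q1 q2)"

end

theory Submission imports Defs "HOL-Analysis.Analysis" begin

lemma Crate_mono:
  assumes v: "valid_chan c N" and "0 \<le> x1" "x1 \<le> y1" "0 \<le> x2" "x2 \<le> y2"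
  shows "Crate c x1 x2 \<le> Crate c y1 y2"
proof -
  from v have h: "h1 c > 0" "h2 c > 0" "s1 c > 0" "s2 c > 0" by (auto simp: valid_chan_def)
  have a: "h1 c * x1 / s2 c \<le> h1 c * y1 / s2 c"
    using h assms by (intro divide_right_mono mult_left_mono) auto
  have b: "h2 c * x2 / s1 c \<le> h2 c * y2 / s1 c"
    using h assms by (intro divide_right_mono mult_left_mono) auto
  have p1: "0 < 1 + h1 c * x1 / s2 c" using h assms by (simp add: add_pos_nonneg)
  have p2: "0 < 1 + h2 c * x2 / s1 c" using h assms by (simp add: add_pos_nonneg)
  have "ln (1 + h1 c * x1 / s2 c) \<le> ln (1 + h1 c * y1 / s2 c)" using a p1 by simp
  moreover have "ln (1 + h2 c * x2 / s1 c) \<le> ln (1 + h2 c * y2 / s1 c)" using b p2 by simp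
  ultimately show ?thesis unfolding Crate_def by simp
qed

lemma Rfun_attain:
  assumes v: "valid_chan c N" and "0 \<le> \<pi>1" "0 \<le> \<pi>2"
  shows "\<exists>d1 d2. 0 \<le> d1 \<and> d1 \<le> \<pi>1 \<and> 0 \<le> d2 \<and> d2 \<le> \<pi>2 \<and>
     Crate c (\<pi>1 - d1 + a2 c * d2) (\<pi>2 - d2 + a1 c * d1) = Rfun c \<pi>1 \<pi>2 \<and>
     (\<forall>e1 e2. 0 \<le> e1 \<and> e1 \<le> \<pi>1 \<and> 0 \<le> e2 \<and> e2 \<le> \<pi>2 \<longrightarrow>
        Crate c (\<pi>1 - e1 + a2 c * e2) (\<pi>2 - e2 + a1 c * e1) \<le> Rfun c \<pi>1 \<pi>2)"
proof -
  from v have h: "h1 c > 0" "h2 c > 0" "s1 c > 0" "s2 c > 0" "0 \<le> a1 c" "0 \<le> a2 c"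
    by (auto simp: valid_chan_def)
  define K where "K = {0..\<pi>1} \<times> {0..\<pi>2}"
  define f where "f = (\<lambda>z::real\<times>real. Crate c (\<pi>1 - fst z + a2 c * snd z) (\<pi>2 - snd z + a1 c * fst z))"
  have "compact K" unfolding K_def by (intro compact_Times compact_Icc)
  moreover have "K \<noteq> {}" unfolding K_def using assms by auto
  moreover have "continuous_on K f"
  proof -
    have pos1: "\<forall>z\<in>K. 1 + h1 c * (\<pi>1 - fst z + a2 c * snd z) / s2 c \<noteq> 0"
    proof
      fix z assume "z \<in> K"
      then have "0 \<le> \<pi>1 - fst z + a2 c * snd z" using h unfolding K_def by auto
      then have "0 \<le> h1 c * (\<pi>1 - fst z + a2 c * snd z) / s2 c" using h by simp
      then show "1 + h1 c * (\<pi>1 - fst z + a2 c * snd z) / s2 c \<noteq> 0" by linarith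
    qed
    have pos2: "\<forall>z\<in>K. 1 + h2 c * (\<pi>2 - snd z + a1 c * fst z) / s1 c \<noteq> 0"
    proof
      fix z assume "z \<in> K"
      then have "0 \<le> \<pi>2 - snd z + a1 c * fst z" using h unfolding K_def by auto
      then have "0 \<le> h2 c * (\<pi>2 - snd z + a1 c * fst z) / s1 c" using h by simp
      then show "1 + h2 c * (\<pi>2 - snd z + a1 c * fst z) / s1 c \<noteq> 0" by linarith
    qed
    show ?thesis unfolding f_def Crate_def
      using pos1 pos2 h by (intro continuous_intros) auto
  qed
  ultimately obtain z where z: "z \<in> K" "\<forall>y\<in>K. f y \<le> f z"
    using continuous_attains_sup by blast
  let ?A = "{Crate c (\<pi>1 - d1 + a2 c * d2) (\<pi>2 - d2 + a1 c * d1) | d1 d2.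
      0 \<le> d1 \<and> d1 \<le> \<pi>1 \<and> 0 \<le> d2 \<and> d2 \<le> \<pi>2}"
  have m1: "f z \<in> ?A" using z(1) unfolding f_def K_def by (cases z) auto
  have m2: "\<forall>x\<in>?A. x \<le> f z"
  proof
    fix x assume "x \<in> ?A"
    then obtain d1 d2 where "x = f (d1, d2)" "(d1,d2) \<in> K" unfolding f_def K_def by auto
    then show "x \<le> f z" using z(2) by auto
  qed
  have R: "Rfun c \<pi>1 \<pi>2 = f z" unfolding Rfun_def using cSup_eq_maximum[OF m1] m2 by blast
  show ?thesis
  proof (intro exI conjI allI impI)
    show "0 \<le> fst z" "fst z \<le> \<pi>1" "0 \<le> snd z" "snd z \<le> \<pi>2" using z(1) unfolding K_def by auto
    show "Crate c (\<pi>1 - fst z + a2 c * snd z) (\<pi>2 - snd z + a1 c * fst z) = Rfun c \<pi>1 \<pi>2"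
      using R unfolding f_def by simp
    fix e1 e2 assume "0 \<le> e1 \<and> e1 \<le> \<pi>1 \<and> 0 \<le> e2 \<and> e2 \<le> \<pi>2"
    then have "(e1,e2) \<in> K" unfolding K_def by auto
    then show "Crate c (\<pi>1 - e1 + a2 c * e2) (\<pi>2 - e2 + a1 c * e1) \<le> Rfun c \<pi>1 \<pi>2"
      using z(2) R unfolding f_def by force
  qed
qed


definition gtr :: "real \<Rightarrow> real \<Rightarrow> real \<Rightarrow> real \<Rightarrow> real \<times> real" where
  "gtr A1 A2 x1 x2 = ((if x2 < 0 then - x2 / A1 else 0), (if x1 < 0 then - x1 / A2 else 0))"

lemma step_lemma:
  fixes A1 A2 x1 x2 t1 t2 s1 s2 :: real
  assumes a: "0 \<le> A1" "A1 \<le> 1" "0 \<le> A2" "A2 \<le> 1"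
    and t: "0 \<le> t1" "0 \<le> t2" and s: "0 \<le> s1" "0 \<le> s2"
    and r1: "s1 \<le> x1 - t1 + A2 * t2" and r2: "s2 \<le> x2 - t2 + A1 * t1"
    and g: "gtr A1 A2 x1 x2 = (g1, g2)"
  shows "0 \<le> g1 \<and> 0 \<le> g2 \<and> A1 * g1 \<le> max 0 (- x2) \<and> A2 * g2 \<le> max 0 (- x1) \<and>
     0 \<le> x1 - g1 + A2 * g2 \<and> 0 \<le> x2 - g2 + A1 * g1 \<and>
     (\<exists>u1 u2. 0 \<le> u1 \<and> 0 \<le> u2 \<and> s1 \<le> (x1 - g1 + A2 * g2) - u1 + A2 * u2 \<and>
        s2 \<le> (x2 - g2 + A1 * g1) - u2 + A1 * u1)"
proof (cases "x2 < 0")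
  case True
  have A1p: "A1 > 0"
  proof (rule ccontr)
    assume "\<not> A1 > 0" then have "A1 = 0" using a by simp
    then show False using r2 True t s by simp
  qed
  have x1: "0 \<le> x1"
  proof (rule ccontr)
    assume "\<not> 0 \<le> x1"
    have "t2 < A1 * t1" using r2 True s by linarith
    moreover have "A1 * t1 \<le> t1" using a t by (simp add: mult_left_le_one_le)
    moreover have "A2 * t2 \<le> t2" using a t by (simp add: mult_left_le_one_le)
    ultimately show False using r1 s \<open>\<not> 0 \<le> x1\<close> by linarith
  qed
  have g1: "g1 = - x2 / A1" "g2 = 0" using g True x1 unfolding gtr_def by auto
  have A1g: "A1 * g1 = - x2" using g1 A1p by simp
  have tg: "g1 \<le> t1"
  proof -
    have "A1 * g1 \<le> A1 * t1" using A1g r2 s t by linarith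
    then show ?thesis using A1p by simp
  qed
  have "x1 - g1 \<ge> 0"
  proof -
    have "A2 * t2 \<le> t2" using a t by (simp add: mult_left_le_one_le)
    have "t2 \<le> A1 * t1 - A1 * g1" using r2 s A1g by linarith
    also have "\<dots> = A1 * (t1 - g1)" by (simp add: algebra_simps)
    also have "\<dots> \<le> t1 - g1" using a tg by (simp add: mult_left_le_one_le)
    finally show ?thesis using r1 s \<open>A2 * t2 \<le> t2\<close> by linarith
  qed
  have g1p: "0 \<le> g1" using A1g A1p True by (metis less_eq_real_def mult_less_0_iff neg_0_less_iff_less not_less)
  have ex: "\<exists>u1 u2. 0 \<le> u1 \<and> 0 \<le> u2 \<and> s1 \<le> (x1 - g1 + A2 * g2) - u1 + A2 * u2 \<and>
        s2 \<le> (x2 - g2 + A1 * g1) - u2 + A1 * u1"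
    apply (rule exI[of _ "t1 - g1"], rule exI[of _ t2])
    using g1 A1g tg t r1 r2 by (auto simp: algebra_simps)
  show ?thesis using \<open>x1 - g1 \<ge> 0\<close> ex g1p g1 A1g True by auto
next
  case F2: False
  show ?thesis
  proof (cases "x1 < 0")
    case True
    have A2p: "A2 > 0"
    proof (rule ccontr)
      assume "\<not> A2 > 0" then have "A2 = 0" using a by simp
      then show False using r1 True t s by simp
    qed
    have g2: "g2 = - x1 / A2" "g1 = 0" using g True F2 unfolding gtr_def by auto
    have A2g: "A2 * g2 = - x1" using g2 A2p by simp
    have tg: "g2 \<le> t2"
    proof -
      have "A2 * g2 \<le> A2 * t2" using A2g r1 s t by linarith
      then show ?thesis using A2p by simp
    qed
    have "x2 - g2 \<ge> 0"
    proof -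
      have "A1 * t1 \<le> t1" using a t by (simp add: mult_left_le_one_le)
      have "t1 \<le> A2 * t2 - A2 * g2" using r1 s A2g by linarith
      also have "\<dots> = A2 * (t2 - g2)" by (simp add: algebra_simps)
      also have "\<dots> \<le> t2 - g2" using a tg by (simp add: mult_left_le_one_le)
      finally show ?thesis using r2 s \<open>A1 * t1 \<le> t1\<close> by linarith
    qed
    have g2p: "0 \<le> g2" using A2g A2p True by (metis less_eq_real_def mult_less_0_iff neg_0_less_iff_less not_less)
    have ex: "\<exists>u1 u2. 0 \<le> u1 \<and> 0 \<le> u2 \<and> s1 \<le> (x1 - g1 + A2 * g2) - u1 + A2 * u2 \<and>
        s2 \<le> (x2 - g2 + A1 * g1) - u2 + A1 * u1"
      apply (rule exI[of _ t1], rule exI[of _ "t2 - g2"])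
      using g2 A2g tg t r1 r2 by (auto simp: algebra_simps)
    show ?thesis using \<open>x2 - g2 \<ge> 0\<close> ex g2p g2 A2g True F2 by auto
  next
    case False
    then have "g1 = 0" "g2 = 0" using g F2 unfolding gtr_def by auto
    then show ?thesis using False F2 t r1 r2 by auto
  qed
qed


fun gst :: "chan \<Rightarrow> (nat\<Rightarrow>real) \<Rightarrow> (nat\<Rightarrow>real) \<Rightarrow> nat \<Rightarrow> real \<times> real" where
  "gst c p1 p2 0 = (0,0)"
| "gst c p1 p2 (Suc i) = (let x1 = fst (gst c p1 p2 i) + E1 c (Suc i) - p1 (Suc i);
      x2 = snd (gst c p1 p2 i) + E2 c (Suc i) - p2 (Suc i); g = gtr (a1 c) (a2 c) x1 x2
    in (x1 - fst g + a2 c * snd g, x2 - snd g + a1 c * fst g))"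

definition "X1 c p1 p2 i = fst (gst c p1 p2 (i-1)) + E1 c i - p1 i"
definition "X2 c p1 p2 i = snd (gst c p1 p2 (i-1)) + E2 c i - p2 i"
definition "G c p1 p2 i = gtr (a1 c) (a2 c) (X1 c p1 p2 i) (X2 c p1 p2 i)"

lemma gst_Suc: "gst c p1 p2 (Suc i) =
   (X1 c p1 p2 (Suc i) - fst (G c p1 p2 (Suc i)) + a2 c * snd (G c p1 p2 (Suc i)),
    X2 c p1 p2 (Suc i) - snd (G c p1 p2 (Suc i)) + a1 c * fst (G c p1 p2 (Suc i)))"
  by (simp add: Let_def X1_def X2_def G_def)

definition "INV c p1 p2 d1 d2 i \<longleftrightarrow> 0 \<le> fst (gst c p1 p2 i) \<and> 0 \<le> snd (gst c p1 p2 i) \<and>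
  (\<exists>t1 t2. 0 \<le> t1 \<and> 0 \<le> t2 \<and> S1 c p1 d1 d2 i \<le> fst (gst c p1 p2 i) - t1 + a2 c * t2 \<and>
     S2 c p2 d1 d2 i \<le> snd (gst c p1 p2 i) - t2 + a1 c * t1)"

lemma step_at:
  assumes v: "valid_chan c N" and f: "feasP c N p1 p2 d1 d2" and j: "Suc j \<le> N"
    and I: "INV c p1 p2 d1 d2 j"
  shows "0 \<le> fst (G c p1 p2 (Suc j)) \<and> 0 \<le> snd (G c p1 p2 (Suc j)) \<and>
     a1 c * fst (G c p1 p2 (Suc j)) \<le> p2 (Suc j) \<and> a2 c * snd (G c p1 p2 (Suc j)) \<le> p1 (Suc j) \<and>
     INV c p1 p2 d1 d2 (Suc j)"
proof -
  let ?i = "Suc j"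
  have a: "0 \<le> a1 c" "a1 c \<le> 1" "0 \<le> a2 c" "a2 c \<le> 1" using v by (auto simp: valid_chan_def)
  have iN: "?i \<in> {1..N}" using j by auto
  have E: "0 \<le> E1 c ?i" "0 \<le> E2 c ?i" using v iN by (auto simp: valid_chan_def)
  have fi: "0 \<le> S1 c p1 d1 d2 ?i" "0 \<le> S2 c p2 d1 d2 ?i" "0 \<le> p1 ?i" "0 \<le> p2 ?i"
    "0 \<le> d1 ?i" "0 \<le> d2 ?i"
    using f iN unfolding feasP_def by blast+
  obtain t1 t2 where t: "0 \<le> t1" "0 \<le> t2" "S1 c p1 d1 d2 j \<le> fst (gst c p1 p2 j) - t1 + a2 c * t2"
     "S2 c p2 d1 d2 j \<le> snd (gst c p1 p2 j) - t2 + a1 c * t1"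
    and B: "0 \<le> fst (gst c p1 p2 j)" "0 \<le> snd (gst c p1 p2 j)"
    using I unfolding INV_def by blast
  have S1s: "S1 c p1 d1 d2 ?i = S1 c p1 d1 d2 j + (E1 c ?i - p1 ?i + a2 c * d2 ?i - d1 ?i)"
    unfolding S1_def by simp
  have S2s: "S2 c p2 d1 d2 ?i = S2 c p2 d1 d2 j + (E2 c ?i - p2 ?i + a1 c * d1 ?i - d2 ?i)"
    unfolding S2_def by simp
  let ?x1 = "X1 c p1 p2 ?i" and ?x2 = "X2 c p1 p2 ?i"
  have x: "?x1 = fst (gst c p1 p2 j) + E1 c ?i - p1 ?i" "?x2 = snd (gst c p1 p2 j) + E2 c ?i - p2 ?i"
    unfolding X1_def X2_def by simp_all
  obtain g1 g2 where g: "G c p1 p2 ?i = (g1, g2)" by (cases "G c p1 p2 ?i")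
  have g': "gtr (a1 c) (a2 c) ?x1 ?x2 = (g1, g2)" using g unfolding G_def by simp
  have r1: "S1 c p1 d1 d2 ?i \<le> ?x1 - (t1 + d1 ?i) + a2 c * (t2 + d2 ?i)"
    using S1s t x by (simp add: algebra_simps)
  have r2: "S2 c p2 d1 d2 ?i \<le> ?x2 - (t2 + d2 ?i) + a1 c * (t1 + d1 ?i)"
    using S2s t x by (simp add: algebra_simps)
  note SL = step_lemma[OF a _ _ fi(1,2) r1 r2 g']
  have tt: "0 \<le> t1 + d1 ?i" "0 \<le> t2 + d2 ?i" using t fi by auto
  note SL = SL[OF tt]
  have "- ?x2 \<le> p2 ?i" using x B E by simp
  have "- ?x1 \<le> p1 ?i" using x B E by simp
  have G1: "a1 c * g1 \<le> p2 ?i" using SL \<open>- ?x2 \<le> p2 ?i\<close> fi by linarith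
  have G2: "a2 c * g2 \<le> p1 ?i" using SL \<open>- ?x1 \<le> p1 ?i\<close> fi by linarith
  have "INV c p1 p2 d1 d2 ?i"
    unfolding INV_def gst_Suc g using SL by simp
  then show ?thesis using G1 G2 SL g by simp
qed

lemma inv_all:
  assumes v: "valid_chan c N" and f: "feasP c N p1 p2 d1 d2"
  shows "i \<le> N \<Longrightarrow> INV c p1 p2 d1 d2 i"
proof (induction i)
  case 0
  show ?case unfolding INV_def S1_def S2_def by (auto intro!: exI[of _ 0])
next
  case (Suc j)
  then show ?case using step_at[OF v f] by simp
qed

lemma prefix_gst:
  "(\<Sum>n=1..i. E1 c n - (p1 n - a2 c * snd (G c p1 p2 n) + fst (G c p1 p2 n))) = fst (gst c p1 p2 i) \<and>
   (\<Sum>n=1..i. E2 c n - (p2 n - a1 c * fst (G c p1 p2 n) + snd (G c p1 p2 n))) = snd (gst c p1 p2 i)"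
proof (induction i)
  case 0 then show ?case by simp
next
  case (Suc i)
  then show ?case unfolding gst_Suc by (simp add: X1_def X2_def algebra_simps)
qed


lemma P_to_Q:
  assumes v: "valid_chan c N" and f: "feasP c N p1 p2 d1 d2"
  shows "\<exists>q1 q2. feasQ c N q1 q2 \<and> objP c N p1 p2 \<le> objQ c N q1 q2"
proof -
  define q1 where "q1 = (\<lambda>n. p1 n - a2 c * snd (G c p1 p2 n) + fst (G c p1 p2 n))"
  define q2 where "q2 = (\<lambda>n. p2 n - a1 c * fst (G c p1 p2 n) + snd (G c p1 p2 n))"
  have slot: "0 \<le> fst (G c p1 p2 i) \<and> 0 \<le> snd (G c p1 p2 i) \<and>
     a1 c * fst (G c p1 p2 i) \<le> p2 i \<and> a2 c * snd (G c p1 p2 i) \<le> p1 i" if i: "i \<in> {1..N}" for i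
  proof -
    obtain j where j: "i = Suc j" using i by (cases i) auto
    have "INV c p1 p2 d1 d2 j" using inv_all[OF v f] i j by simp
    then show ?thesis using step_at[OF v f] i j by simp
  qed
  have fq: "feasQ c N q1 q2"
    unfolding feasQ_def
  proof
    fix i assume i: "i \<in> {1..N}"
    have "INV c p1 p2 d1 d2 i" using inv_all[OF v f] i by simp
    then have "0 \<le> fst (gst c p1 p2 i)" "0 \<le> snd (gst c p1 p2 i)" unfolding INV_def by auto
    then show "0 \<le> (\<Sum>n = 1..i. E1 c n - q1 n) \<and> 0 \<le> (\<Sum>n = 1..i. E2 c n - q2 n) \<and> 0 \<le> q1 i \<and> 0 \<le> q2 i"
      using prefix_gst[of c p1 p2 i] slot[OF i] unfolding q1_def q2_def by auto
  qed
  have "objP c N p1 p2 \<le> objQ c N q1 q2"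
    unfolding objP_def objQ_def
  proof (rule sum_mono)
    fix i assume i: "i \<in> {1..N}"
    note s = slot[OF i]
    have q0: "0 \<le> q1 i" "0 \<le> q2 i" using fq i unfolding feasQ_def by auto
    obtain e1 e2 where "\<forall>e1 e2. 0 \<le> e1 \<and> e1 \<le> q1 i \<and> 0 \<le> e2 \<and> e2 \<le> q2 i \<longrightarrow>
        Crate c (q1 i - e1 + a2 c * e2) (q2 i - e2 + a1 c * e1) \<le> Rfun c (q1 i) (q2 i)"
      using Rfun_attain[OF v q0] by blast
    note H = this[rule_format, of "fst (G c p1 p2 i)" "snd (G c p1 p2 i)"]
    have "Crate c (q1 i - fst (G c p1 p2 i) + a2 c * snd (G c p1 p2 i))
        (q2 i - snd (G c p1 p2 i) + a1 c * fst (G c p1 p2 i)) \<le> Rfun c (q1 i) (q2 i)"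
      using s by (intro H) (auto simp: q1_def q2_def)
    then show "Crate c (p1 i) (p2 i) \<le> Rfun c (q1 i) (q2 i)"
      unfolding q1_def q2_def by simp
  qed
  then show ?thesis using fq by blast
qed

lemma Q_to_P:
  assumes v: "valid_chan c N" and f: "feasQ c N q1 q2"
    and d: "\<forall>i\<in>{1..N}. 0 \<le> d1 i \<and> d1 i \<le> q1 i \<and> 0 \<le> d2 i \<and> d2 i \<le> q2 i \<and>
          Crate c (q1 i - d1 i + a2 c * d2 i) (q2 i - d2 i + a1 c * d1 i) = Rfun c (q1 i) (q2 i)"
  shows "feasP c N (\<lambda>i. q1 i - d1 i + a2 c * d2 i) (\<lambda>i. q2 i - d2 i + a1 c * d1 i) d1 d2 \<and>
    objP c N (\<lambda>i. q1 i - d1 i + a2 c * d2 i) (\<lambda>i. q2 i - d2 i + a1 c * d1 i) = objQ c N q1 q2"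
proof
  have a: "0 \<le> a1 c" "0 \<le> a2 c" using v by (auto simp: valid_chan_def)
  show "feasP c N (\<lambda>i. q1 i - d1 i + a2 c * d2 i) (\<lambda>i. q2 i - d2 i + a1 c * d1 i) d1 d2"
    unfolding feasP_def
  proof
    fix i assume i: "i \<in> {1..N}"
    have e1: "S1 c (\<lambda>i. q1 i - d1 i + a2 c * d2 i) d1 d2 i = (\<Sum>n=1..i. E1 c n - q1 n)"
      unfolding S1_def by (rule sum.cong) auto
    have e2: "S2 c (\<lambda>i. q2 i - d2 i + a1 c * d1 i) d1 d2 i = (\<Sum>n=1..i. E2 c n - q2 n)"
      unfolding S2_def by (rule sum.cong) auto
    have "0 \<le> a2 c * d2 i" "0 \<le> a1 c * d1 i" using d i a by auto
    then show "0 \<le> S1 c (\<lambda>i. q1 i - d1 i + a2 c * d2 i) d1 d2 i \<and>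
          0 \<le> S2 c (\<lambda>i. q2 i - d2 i + a1 c * d1 i) d1 d2 i \<and>
          0 \<le> q1 i - d1 i + a2 c * d2 i \<and> 0 \<le> q2 i - d2 i + a1 c * d1 i \<and> 0 \<le> d1 i \<and> 0 \<le> d2 i"
      unfolding e1 e2 using f i d unfolding feasQ_def by auto
  qed
  show "objP c N (\<lambda>i. q1 i - d1 i + a2 c * d2 i) (\<lambda>i. q2 i - d2 i + a1 c * d1 i) = objQ c N q1 q2"
    unfolding objP_def objQ_def using d by (intro sum.cong) auto
qed

lemma Q_bound:
  assumes v: "valid_chan c N" and f: "feasQ c N q1 q2"
  shows "objQ c N q1 q2 \<le> real N * Crate c ((\<Sum>n=1..N. E1 c n) + (\<Sum>n=1..N. E2 c n))
                                          ((\<Sum>n=1..N. E1 c n) + (\<Sum>n=1..N. E2 c n))"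
proof -
  let ?M = "(\<Sum>n=1..N. E1 c n) + (\<Sum>n=1..N. E2 c n)"
  have a: "0 \<le> a1 c" "a1 c \<le> 1" "0 \<le> a2 c" "a2 c \<le> 1" using v by (auto simp: valid_chan_def)
  have "\<forall>i\<in>{1..N}. Rfun c (q1 i) (q2 i) \<le> Crate c ?M ?M"
  proof
    fix i assume i: "i \<in> {1..N}"
    have q0: "0 \<le> q1 i" "0 \<le> q2 i" using f i unfolding feasQ_def by auto
    have qle1: "q1 i \<le> (\<Sum>n=1..N. E1 c n)"
    proof -
      have "q1 i \<le> (\<Sum>n=1..i. q1 n)"
        by (rule member_le_sum) (use i f in \<open>auto simp: feasQ_def\<close>)
      also have "\<dots> \<le> (\<Sum>n=1..i. E1 c n)" using f i unfolding feasQ_def sum_subtractf by auto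
      also have "\<dots> \<le> (\<Sum>n=1..N. E1 c n)"
        by (rule sum_mono2) (use i v in \<open>auto simp: valid_chan_def\<close>)
      finally show ?thesis .
    qed
    have qle2: "q2 i \<le> (\<Sum>n=1..N. E2 c n)"
    proof -
      have "q2 i \<le> (\<Sum>n=1..i. q2 n)"
        by (rule member_le_sum) (use i f in \<open>auto simp: feasQ_def\<close>)
      also have "\<dots> \<le> (\<Sum>n=1..i. E2 c n)" using f i unfolding feasQ_def sum_subtractf by auto
      also have "\<dots> \<le> (\<Sum>n=1..N. E2 c n)"
        by (rule sum_mono2) (use i v in \<open>auto simp: valid_chan_def\<close>)
      finally show ?thesis .
    qed
    obtain e1 e2 where e: "0 \<le> e1" "e1 \<le> q1 i" "0 \<le> e2" "e2 \<le> q2 i"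
      "Crate c (q1 i - e1 + a2 c * e2) (q2 i - e2 + a1 c * e1) = Rfun c (q1 i) (q2 i)"
      using Rfun_attain[OF v q0] by blast
    have "a2 c * e2 \<le> e2" "a1 c * e1 \<le> e1" using a e by (auto simp: mult_left_le_one_le)
    moreover have "0 \<le> a2 c * e2" "0 \<le> a1 c * e1" using a e by auto
    ultimately have "Crate c (q1 i - e1 + a2 c * e2) (q2 i - e2 + a1 c * e1) \<le> Crate c ?M ?M"
      using e qle1 qle2 by (intro Crate_mono[OF v]) auto
    then show "Rfun c (q1 i) (q2 i) \<le> Crate c ?M ?M" using e by simp
  qed
  then have "objQ c N q1 q2 \<le> of_nat (card {1..N}) * Crate c ?M ?M"
    unfolding objQ_def using sum_bounded_above by (metis (no_types, lifting))
  then show ?thesis by simp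
qed

theorem mainTheorem4:
  assumes "valid_chan c N"
  shows "optP c N = optQ c N \<and>
    (\<forall>q1 q2 d1 d2. optimalQ c N q1 q2 \<longrightarrow>
       (\<forall>i\<in>{1..N}. 0 \<le> d1 i \<and> d1 i \<le> q1 i \<and> 0 \<le> d2 i \<and> d2 i \<le> q2 i \<and>
          Crate c (q1 i - d1 i + a2 c * d2 i) (q2 i - d2 i + a1 c * d1 i) = Rfun c (q1 i) (q2 i)) \<longrightarrow>
       optimalP c N (\<lambda>i. q1 i - d1 i + a2 c * d2 i) (\<lambda>i. q2 i - d2 i + a1 c * d1 i) d1 d2)"
proof
  note v = assms
  let ?SP = "{objP c N p1 p2 | p1 p2 d1 d2. feasP c N p1 p2 d1 d2}"
  let ?SQ = "{objQ c N q1 q2 | q1 q2. feasQ c N q1 q2}"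
  have E0: "\<forall>i\<in>{1..N}. 0 \<le> E1 c i \<and> 0 \<le> E2 c i" using v by (auto simp: valid_chan_def)
  have fQ0: "feasQ c N (\<lambda>_. 0) (\<lambda>_. 0)" unfolding feasQ_def using E0
    by (auto intro!: sum_nonneg)
  have fP0: "feasP c N (\<lambda>_. 0) (\<lambda>_. 0) (\<lambda>_. 0) (\<lambda>_. 0)" unfolding feasP_def S1_def S2_def using E0
    by (auto intro!: sum_nonneg)
  have neP: "?SP \<noteq> {}" using fP0 by blast
  have neQ: "?SQ \<noteq> {}" using fQ0 by blast
  have bQ: "bdd_above ?SQ" using Q_bound[OF v] unfolding bdd_above_def by blast
  have "optP c N \<le> optQ c N"
    unfolding optP_def
  proof (rule cSup_least[OF neP])
    fix x assume "x \<in> ?SP"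
    then obtain p1 p2 d1 d2 where x: "x = objP c N p1 p2" "feasP c N p1 p2 d1 d2" by blast
    obtain q1 q2 where "feasQ c N q1 q2" "objP c N p1 p2 \<le> objQ c N q1 q2" using P_to_Q[OF v x(2)] by blast
    moreover have "objQ c N q1 q2 \<le> optQ c N" unfolding optQ_def
      by (rule cSup_upper[OF _ bQ]) (use \<open>feasQ c N q1 q2\<close> in blast)
    ultimately show "x \<le> optQ c N" using x by simp
  qed
  have bP: "bdd_above ?SP"
  proof -
    have "x \<le> optQ c N" if "x \<in> ?SP" for x
    proof -
      from that obtain p1 p2 d1 d2 where x: "x = objP c N p1 p2" "feasP c N p1 p2 d1 d2" by blast
      obtain q1 q2 where "feasQ c N q1 q2" "objP c N p1 p2 \<le> objQ c N q1 q2" using P_to_Q[OF v x(2)] by blast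
      moreover have "objQ c N q1 q2 \<le> optQ c N" unfolding optQ_def
        by (rule cSup_upper[OF _ bQ]) (use \<open>feasQ c N q1 q2\<close> in blast)
      ultimately show ?thesis using x by simp
    qed
    then show ?thesis unfolding bdd_above_def by blast
  qed
  have "optQ c N \<le> optP c N"
    unfolding optQ_def
  proof (rule cSup_least[OF neQ])
    fix x assume "x \<in> ?SQ"
    then obtain q1 q2 where x: "x = objQ c N q1 q2" "feasQ c N q1 q2" by blast
    have "\<forall>i. \<exists>dd. i \<in> {1..N} \<longrightarrow> 0 \<le> fst dd \<and> fst dd \<le> q1 i \<and> 0 \<le> snd dd \<and> snd dd \<le> q2 i \<and>
          Crate c (q1 i - fst dd + a2 c * snd dd) (q2 i - snd dd + a1 c * fst dd) = Rfun c (q1 i) (q2 i)"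
    proof
      fix i
      show "\<exists>dd. i \<in> {1..N} \<longrightarrow> 0 \<le> fst dd \<and> fst dd \<le> q1 i \<and> 0 \<le> snd dd \<and> snd dd \<le> q2 i \<and>
          Crate c (q1 i - fst dd + a2 c * snd dd) (q2 i - snd dd + a1 c * fst dd) = Rfun c (q1 i) (q2 i)"
      proof (cases "i \<in> {1..N}")
        case True
        then have q0: "0 \<le> q1 i" "0 \<le> q2 i" using x unfolding feasQ_def by auto
        then obtain e1 e2 where "0 \<le> e1 \<and> e1 \<le> q1 i \<and> 0 \<le> e2 \<and> e2 \<le> q2 i \<and>
          Crate c (q1 i - e1 + a2 c * e2) (q2 i - e2 + a1 c * e1) = Rfun c (q1 i) (q2 i)"
          using Rfun_attain[OF v q0] by blast
        then show ?thesis by (intro exI[of _ "(e1,e2)"]) simp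
      next
        case False then show ?thesis by blast
      qed
    qed
    then obtain D where D: "\<forall>i. i \<in> {1..N} \<longrightarrow> 0 \<le> fst (D i) \<and> fst (D i) \<le> q1 i \<and> 0 \<le> snd (D i) \<and> snd (D i) \<le> q2 i \<and>
          Crate c (q1 i - fst (D i) + a2 c * snd (D i)) (q2 i - snd (D i) + a1 c * fst (D i)) = Rfun c (q1 i) (q2 i)"
      by (metis choice)
    have "\<forall>i\<in>{1..N}. 0 \<le> (fst \<circ> D) i \<and> (fst \<circ> D) i \<le> q1 i \<and> 0 \<le> (snd \<circ> D) i \<and> (snd \<circ> D) i \<le> q2 i \<and>
          Crate c (q1 i - (fst \<circ> D) i + a2 c * (snd \<circ> D) i) (q2 i - (snd \<circ> D) i + a1 c * (fst \<circ> D) i) = Rfun c (q1 i) (q2 i)"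
      using D by simp
    note QP = Q_to_P[OF v x(2) this]
    have "objQ c N q1 q2 \<in> ?SP" using QP by (metis (mono_tags, lifting) mem_Collect_eq)
    then show "x \<le> optP c N" unfolding optP_def using x cSup_upper[OF _ bP] by simp
  qed
  show "optP c N = optQ c N" using \<open>optP c N \<le> optQ c N\<close> \<open>optQ c N \<le> optP c N\<close> by simp
  show "\<forall>q1 q2 d1 d2. optimalQ c N q1 q2 \<longrightarrow>
       (\<forall>i\<in>{1..N}. 0 \<le> d1 i \<and> d1 i \<le> q1 i \<and> 0 \<le> d2 i \<and> d2 i \<le> q2 i \<and>
          Crate c (q1 i - d1 i + a2 c * d2 i) (q2 i - d2 i + a1 c * d1 i) = Rfun c (q1 i) (q2 i)) \<longrightarrow>
       optimalP c N (\<lambda>i. q1 i - d1 i + a2 c * d2 i) (\<lambda>i. q2 i - d2 i + a1 c * d1 i) d1 d2"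
  proof (intro allI impI)
    fix q1 q2 d1 d2
    assume o: "optimalQ c N q1 q2"
      and d: "\<forall>i\<in>{1..N}. 0 \<le> d1 i \<and> d1 i \<le> q1 i \<and> 0 \<le> d2 i \<and> d2 i \<le> q2 i \<and>
          Crate c (q1 i - d1 i + a2 c * d2 i) (q2 i - d2 i + a1 c * d1 i) = Rfun c (q1 i) (q2 i)"
    have fq: "feasQ c N q1 q2" using o unfolding optimalQ_def by simp
    note QP = Q_to_P[OF v fq d]
    show "optimalP c N (\<lambda>i. q1 i - d1 i + a2 c * d2 i) (\<lambda>i. q2 i - d2 i + a1 c * d1 i) d1 d2"
      unfolding optimalP_def
    proof (intro conjI allI impI)
      show "feasP c N (\<lambda>i. q1 i - d1 i + a2 c * d2 i) (\<lambda>i. q2 i - d2 i + a1 c * d1 i) d1 d2"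
        using QP by simp
      fix r1 r2 e1 e2 assume "feasP c N r1 r2 e1 e2"
      then obtain s1 s2 where "feasQ c N s1 s2" "objP c N r1 r2 \<le> objQ c N s1 s2"
        using P_to_Q[OF v] by blast
      moreover have "objQ c N s1 s2 \<le> objQ c N q1 q2" using o \<open>feasQ c N s1 s2\<close>
        unfolding optimalQ_def by blast
      ultimately show "objP c N r1 r2 \<le> objP c N (\<lambda>i. q1 i - d1 i + a2 c * d2 i) (\<lambda>i. q2 i - d2 i + a1 c * d1 i)"
        using QP by simp
    qed
  qed
qed

end
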